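(* For any $g>0$, $\kappa>0$, $\mathtt h\in(0,\infty]$, any lattice $\Gamma\subset\mathbb R^2$ and any $c_*\in\mathbb R^2$, any line through the origin contains at most two elements of the set $\mathcal V=\{j\in\Gamma'\setminus\{0\}:\omega(j)=c_*\cdot j\}$; i.e. $\mathcal V$ contains at most two pairwise collinear vectors.
   Context: $\Gamma'$ is the dual lattice of $\Gamma$ (a lattice in $\mathbb R^2$), and $\omega(\xi)=\sqrt{(g+\kappa|\xi|^2)|\xi|\tanh(\mathtt h|\xi|)}$ for $\xi\in\mathbb R^2$, with $\tanh(\mathtt h|\xi|)$ replaced by $1$ when $\mathtt h=\infty$. *)

theory Defs
  imports "HOL-Analysis.Analysis" "HOL-Library.Extended_Real"
begin

definition lattice2 :: "(real^2) set \<Rightarrow> bool" where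
  "lattice2 \<Gamma> \<longleftrightarrow> (\<exists>a b. independent ({a, b} :: (real^2) set) \<and> a \<noteq> b \<and>
      \<Gamma> = {of_int m *\<^sub>R a + of_int n *\<^sub>R b | m n. True})"

definition dual_lattice :: "(real^2) set \<Rightarrow> (real^2) set" where
  "dual_lattice \<Gamma> = {\<xi>. \<forall>\<gamma>\<in>\<Gamma>. \<xi> \<bullet> \<gamma> \<in> \<int>}"

definition omega :: "real \<Rightarrow> real \<Rightarrow> ereal \<Rightarrow> real^2 \<Rightarrow> real" where
  "omega g \<kappa> h \<xi> = sqrt ((g + \<kappa> * (norm \<xi>)^2) * norm \<xi> *
      (if h = \<infinity> then 1 else tanh (real_of_ereal h * norm \<xi>)))"

definition resonant_set :: "real \<Rightarrow> real \<Rightarrow> ereal \<Rightarrow> (real^2) set \<Rightarrow> real^2 \<Rightarrow> (real^2) set" where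
  "resonant_set g \<kappa> h \<Gamma> c = {j \<in> dual_lattice \<Gamma> - {0}. omega g \<kappa> h j = c \<bullet> j}"

end

theory Submission
  imports Defs
begin
lemma pos_from_deriv:
  fixes f f' :: "real \<Rightarrow> real"
  assumes "f 0 = 0" and "\<And>x. x \<ge> 0 \<Longrightarrow> DERIV f x :> f' x"
    and "\<And>x. x > 0 \<Longrightarrow> f' x > 0" and "x > 0"
  shows "f x > 0"
proof -
  obtain z where "0 < z" "z < x" "f x - f 0 = (x - 0) * f' z"
    using MVT2[of 0 x f f'] assms by auto
  then show ?thesis using assms(1) assms(3)[of z] \<open>x > 0\<close> by simp
qed

lemma F_pos:
  fixes x :: real assumes "x > 0"
  shows "2 * sinh x * cosh x ^ 3 - sinh x * cosh x - x > 0"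
proof (rule pos_from_deriv[where f = "\<lambda>x. 2 * sinh x * cosh x ^ 3 - sinh x * cosh x - x"
      and f' = "\<lambda>x. 8 * sinh x ^ 2 + 8 * sinh x ^ 4"])
  fix x :: real
  have c: "cosh x ^ 2 = sinh x ^ 2 + 1" by (rule cosh_square_eq)
  have "DERIV (\<lambda>x. 2 * sinh x * cosh x ^ 3 - sinh x * cosh x - x) x :>
     2 * (cosh x * cosh x ^ 3 + sinh x * (3 * cosh x ^ 2 * sinh x)) - (cosh x * cosh x + sinh x * sinh x) - 1"
    by (auto intro!: derivative_eq_intros simp: algebra_simps)
  moreover have "2 * (cosh x * cosh x ^ 3 + sinh x * (3 * cosh x ^ 2 * sinh x)) - (cosh x * cosh x + sinh x * sinh x) - 1
      = 8 * sinh x ^ 2 + 8 * sinh x ^ 4"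
    using c by algebra
  ultimately show "DERIV (\<lambda>x. 2 * sinh x * cosh x ^ 3 - sinh x * cosh x - x) x :> 8 * sinh x ^ 2 + 8 * sinh x ^ 4"
    by simp
next
  fix x :: real assume "x > 0"
  then have "sinh x > 0" by simp
  then show "8 * sinh x ^ 2 + 8 * sinh x ^ 4 > 0" by (simp add: add_pos_nonneg)
qed (use assms in auto)

lemma E1_pos:
  fixes x :: real assumes "x > 0"
  shows "2 * sinh x * cosh x + sinh x / cosh x + x / (cosh x)^2 - 4 * x > 0"
proof (rule pos_from_deriv[where f = "\<lambda>x. 2 * sinh x * cosh x + sinh x / cosh x + x / (cosh x)^2 - 4 * x"
      and f' = "\<lambda>x. 2 * sinh x * (2 * sinh x * cosh x ^ 3 - sinh x * cosh x - x) / cosh x ^ 3"])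
  fix x :: real
  have c: "cosh x ^ 2 = sinh x ^ 2 + 1" by (rule cosh_square_eq)
  have cp: "cosh x > 0" by simp
  show "DERIV (\<lambda>x. 2 * sinh x * cosh x + sinh x / cosh x + x / (cosh x)^2 - 4 * x) x :>
     2 * sinh x * (2 * sinh x * cosh x ^ 3 - sinh x * cosh x - x) / cosh x ^ 3"
    apply (rule derivative_eq_intros refl | simp)+
    using cp apply (simp add: field_simps)
    using c by algebra
next
  fix x :: real assume "x > 0"
  then show "2 * sinh x * (2 * sinh x * cosh x ^ 3 - sinh x * cosh x - x) / cosh x ^ 3 > 0"
    using F_pos[of x] by simp
qed (use assms in auto)

lemma E_pos:
  fixes x :: real assumes "x > 0"
  shows "sinh x ^ 2 + x * sinh x / cosh x - 2 * x^2 > 0"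
proof (rule pos_from_deriv[where f = "\<lambda>x. sinh x ^ 2 + x * sinh x / cosh x - 2 * x^2"
      and f' = "\<lambda>x. 2 * sinh x * cosh x + sinh x / cosh x + x / (cosh x)^2 - 4 * x"])
  fix x :: real
  have c: "cosh x ^ 2 = sinh x ^ 2 + 1" by (rule cosh_square_eq)
  have cp: "cosh x > 0" by simp
  show "DERIV (\<lambda>x. sinh x ^ 2 + x * sinh x / cosh x - 2 * x^2) x :>
     2 * sinh x * cosh x + sinh x / cosh x + x / (cosh x)^2 - 4 * x"
    apply (rule derivative_eq_intros refl | simp)+
    using cp apply (simp add: field_simps)
    using c by algebra
qed (use assms E1_pos in auto)

lemma D_pos:
  fixes x :: real assumes "x > 0"
  shows "cosh x * sinh x ^ 2 + x * sinh x - 2 * x^2 * cosh x > 0"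
proof -
  have "cosh x * sinh x ^ 2 + x * sinh x - 2 * x^2 * cosh x
     = cosh x * (sinh x ^ 2 + x * sinh x / cosh x - 2 * x^2)"
    by (simp add: field_simps)
  then show ?thesis using E_pos[OF assms] by simp
qed

lemma m_eq:
  fixes s c x :: real assumes "s > 0" "x > 0" and c: "c^2 = s^2 + 1"
  shows "((s * s + c * c - 1) * (x * (s)\<^sup>2) -
      (c * s - x) * ((s)\<^sup>2 + 2 * (c * s) * x)) /
     (x * (s)\<^sup>2 * (x * (s)\<^sup>2)) =
     (2 * x\<^sup>2 * c - (c * (s)\<^sup>2 + x * s)) /
     (x\<^sup>2 * s ^ 3)"
  using assms(1,2) apply (simp add: divide_simps)
  using c by algebra

lemma m_decr:
  fixes a b :: real assumes "0 < a" "a < b"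
  shows "(cosh b * sinh b - b) / (b * sinh b ^ 2) < (cosh a * sinh a - a) / (a * sinh a ^ 2)"
proof -
  let ?m = "\<lambda>x::real. (cosh x * sinh x - x) / (x * sinh x ^ 2)"
  let ?m' = "\<lambda>x::real. - (cosh x * sinh x ^ 2 + x * sinh x - 2 * x^2 * cosh x) / (x^2 * sinh x ^ 3)"
  have "DERIV ?m x :> ?m' x" if "a \<le> x" for x
  proof -
    have xp: "x > 0" using that assms by simp
    then have sp: "sinh x > 0" by simp
    have c: "cosh x ^ 2 = sinh x ^ 2 + 1" by (rule cosh_square_eq)
    show ?thesis
      apply (auto intro!: derivative_eq_intros)
      using xp apply simp
      by (rule m_eq[OF sp xp c])
  qed
  then obtain z where z: "a < z" "z < b" "?m b - ?m a = (b - a) * ?m' z"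
    using MVT2[of a b ?m ?m'] assms by auto
  have "?m' z < 0" using D_pos[of z] z assms by (simp add: divide_neg_pos)
  moreover have "b - a > 0" using assms by simp
  ultimately have "(b - a) * ?m' z < 0" using mult_pos_neg by blast
  then show ?thesis using z by linarith
qed

lemma three_roots_false:
  fixes p q bb x1 x2 x3 :: real
  assumes "p > 0" "q > 0" "bb > 0" "0 < x1" "x1 < x2" "x2 < x3"
    and r: "\<And>x. x \<in> {x1, x2, x3} \<Longrightarrow> bb * x * cosh x = (q * x^2 + p) * sinh x"
  shows False
proof -
  let ?L = "\<lambda>x::real. bb * x * cosh x / sinh x - q * x^2 - p"
  let ?L' = "\<lambda>x::real. bb * (cosh x * sinh x - x) / sinh x ^ 2 - 2 * q * x"
  have der: "DERIV ?L x :> ?L' x" if "x > 0" for x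
  proof -
    have sp: "sinh x > 0" using that by simp
    have c: "cosh x ^ 2 = sinh x ^ 2 + 1" by (rule cosh_square_eq)
    show ?thesis
      apply (auto intro!: derivative_eq_intros)
      using sp apply (simp add: field_simps power2_eq_square power3_eq_cube)
      using c by algebra
  qed
  have L0: "?L x = 0" if "x \<in> {x1, x2, x3}" for x
  proof -
    have "x > 0" using that assms by auto
    then have "sinh x > 0" by simp
    then show ?thesis using r[OF that] by (simp add: field_simps)
  qed
  have root: "\<exists>z. a < z \<and> z < b \<and> (cosh z * sinh z - z) / (z * sinh z ^ 2) = 2 * q / bb"
    if "a \<in> {x1,x2,x3}" "b \<in> {x1,x2,x3}" "a < b" for a b
  proof -
    have ap: "a > 0" using that assms by auto
    obtain z where z: "a < z" "z < b" "?L b - ?L a = (b - a) * ?L' z"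
      using MVT2[of a b ?L ?L'] der ap \<open>a < b\<close> by auto
    have "?L' z = 0" using z L0[OF that(1)] L0[OF that(2)] \<open>a < b\<close> by simp
    moreover have zp: "z > 0" "sinh z > 0" using z ap by auto
    ultimately have "bb * (cosh z * sinh z - z) = 2 * q * z * sinh z ^ 2"
      by (simp add: field_simps)
    then have "(cosh z * sinh z - z) / (z * sinh z ^ 2) = 2 * q / bb"
      using zp assms(3) by (simp add: field_simps)
    then show ?thesis using z by blast
  qed
  obtain z1 where z1: "x1 < z1" "z1 < x2" "(cosh z1 * sinh z1 - z1) / (z1 * sinh z1 ^ 2) = 2 * q / bb"
    using root[of x1 x2] assms by auto
  obtain z2 where z2: "x2 < z2" "z2 < x3" "(cosh z2 * sinh z2 - z2) / (z2 * sinh z2 ^ 2) = 2 * q / bb"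
    using root[of x2 x3] assms by auto
  show False using m_decr[of z1 z2] z1 z2 assms by simp
qed

lemma quad_false:
  fixes g k A r1 r2 r3 :: real
  assumes "k > 0" "r1 \<noteq> r2" "r2 \<noteq> r3" "r1 \<noteq> r3"
    and "g + k * r1^2 = A * r1" "g + k * r2^2 = A * r2" "g + k * r3^2 = A * r3"
  shows False
proof -
  have e: "k * (r1 + r2) = A" if "a \<noteq> b" "g + k * a^2 = A * a" "g + k * b^2 = A * b"
    and "r1 = a" "r2 = b" for a b
  proof -
    have "(a - b) * (k * (a + b) - A) = 0" using that(2,3) by (simp add: algebra_simps power2_eq_square)
    then show ?thesis using that by simp
  qed
  have "(r1 - r2) * (k * (r1 + r2) - A) = 0" using assms(5,6) by (simp add: algebra_simps power2_eq_square)
  then have 1: "k * (r1 + r2) = A" using assms by simp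
  have "(r1 - r3) * (k * (r1 + r3) - A) = 0" using assms(5,7) by (simp add: algebra_simps power2_eq_square)
  then have 2: "k * (r1 + r3) = A" using assms by simp
  from 1 2 have "k * (r2 - r3) = 0" by (simp only: right_diff_distrib) argo
  then have "r2 = r3" using assms(1) by simp
  then show False using assms by simp
qed

lemma three_sort:
  fixes x y z :: real
  assumes H: "\<And>a b c. a < b \<Longrightarrow> b < c \<Longrightarrow> P a \<Longrightarrow> P b \<Longrightarrow> P c \<Longrightarrow> False"
    and "P x" "P y" "P z" "x \<noteq> y" "y \<noteq> z" "x \<noteq> z"
  shows False
proof (cases "x < y")
  case True
  then show ?thesis
  proof (cases "y < z")
    case True then show ?thesis using H[of x y z] \<open>x < y\<close> assms by auto
  next
    case False then have "z < y" using assms by auto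
    then show ?thesis using H[of x z y] H[of z x y] \<open>x < y\<close> assms by (cases "x < z") auto
  qed
next
  case False then have "y < x" using assms by auto
  then show ?thesis
  proof (cases "x < z")
    case True then show ?thesis using H[of y x z] \<open>y < x\<close> assms by auto
  next
    case False then have "z < x" using assms by auto
    then show ?thesis using H[of y z x] H[of z y x] \<open>y < x\<close> assms by (cases "y < z") auto
  qed
qed

lemma tanh_false:
  fixes g k H A r1 r2 r3 :: real
  assumes "g > 0" "k > 0" "H > 0" "A > 0" "r1 \<noteq> r2" "r2 \<noteq> r3" "r1 \<noteq> r3"
    and P: "\<And>r. r \<in> {r1, r2, r3} \<Longrightarrow> r > 0 \<and> (g + k * r^2) * tanh (H * r) = A * r"
  shows False
proof (rule three_sort[where P = "\<lambda>r. r > 0 \<and> (g + k * r^2) * tanh (H * r) = A * r"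
    and x = r1 and y = r2 and z = r3])
  fix a b c :: real
  assume ab: "a < b" "b < c"
    and Pa: "a > 0 \<and> (g + k * a^2) * tanh (H * a) = A * a"
    and Pb: "b > 0 \<and> (g + k * b^2) * tanh (H * b) = A * b"
    and Pc: "c > 0 \<and> (g + k * c^2) * tanh (H * c) = A * c"
  have conv: "(A / H) * x * cosh x = (k / H^2 * x^2 + g) * sinh x"
    if "(g + k * r^2) * tanh (H * r) = A * r" "x = H * r" for r x
  proof -
    have "(g + k * r^2) * sinh (H * r) = A * r * cosh (H * r)"
      using that(1) by (simp add: tanh_def field_simps)
    then show ?thesis using that(2) assms(3) by (simp add: field_simps power2_eq_square)
  qed
  show False
  proof (rule three_roots_false[of g "k / H^2" "A / H" "H * a" "H * b" "H * c"])
    show "H * a < H * b" "H * b < H * c" using ab assms(3) by auto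
    show "0 < H * a" using Pa assms(3) by simp
    fix x assume "x \<in> {H * a, H * b, H * c}"
    then show "A / H * x * cosh x = (k / H\<^sup>2 * x\<^sup>2 + g) * sinh x"
      using conv Pa Pb Pc by blast
  qed (use assms in auto)
qed (use assms P in auto)

lemma point_facts:
  fixes g \<kappa> :: real and h :: ereal and \<Gamma> :: "(real^2) set" and c v j :: "real^2"
  assumes "g > 0" and "\<kappa> > 0" and "h > 0" and "v \<noteq> 0"
    and j: "j \<in> resonant_set g \<kappa> h \<Gamma> c \<inter> {t *\<^sub>R v | t. True}"
  shows "\<exists>t. j = t *\<^sub>R v \<and> t * (c \<bullet> v) > 0 \<and> norm j > 0 \<and>
    (g + \<kappa> * (norm j)^2) * (if h = \<infinity> then 1 else tanh (real_of_ereal h * norm j))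
      = ((c \<bullet> v)^2 / (norm v)^2) * norm j"
proof -
  obtain t where jt: "j = t *\<^sub>R v" using j by auto
  have j0: "j \<noteq> 0" and om: "omega g \<kappa> h j = c \<bullet> j" using j unfolding resonant_set_def by auto
  define r where "r = norm j"
  have rp: "r > 0" using j0 r_def by simp
  define K where "K = (if h = \<infinity> then 1 else tanh (real_of_ereal h * r))"
  have hr: "h \<noteq> \<infinity> \<Longrightarrow> real_of_ereal h > 0" using assms(3) by (cases h) auto
  have Kp: "K > 0" unfolding K_def using hr rp by auto
  define X where "X = (g + \<kappa> * r^2) * r * K"
  have Xp: "X > 0" unfolding X_def using Kp rp assms(1,2) by (simp add: add_pos_nonneg)
  have "omega g \<kappa> h j = sqrt X" unfolding omega_def X_def K_def r_def by simp
  then have sq: "sqrt X = t * (c \<bullet> v)" using om jt by simp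
  then have pos: "t * (c \<bullet> v) > 0" using Xp by (metis real_sqrt_gt_zero)
  have "X = (t * (c \<bullet> v))^2" using sq Xp by (metis less_eq_real_def real_sqrt_pow2)
  moreover have "r = \<bar>t\<bar> * norm v" using jt r_def by simp
  ultimately have "X = ((c \<bullet> v)^2 / (norm v)^2) * r^2"
    using assms(4) by (simp add: power_mult_distrib field_simps)
  then have "(g + \<kappa> * r^2) * K * r = ((c \<bullet> v)^2 / (norm v)^2) * r * r"
    unfolding X_def by (simp add: algebra_simps power2_eq_square)
  then have "((g + \<kappa> * r^2) * K) * r = (((c \<bullet> v)^2 / (norm v)^2) * r) * r"
    by (simp add: algebra_simps)
  then have "(g + \<kappa> * r^2) * K = ((c \<bullet> v)^2 / (norm v)^2) * r"
    using rp by (metis mult_right_cancel less_irrefl)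
  then show ?thesis using jt pos rp unfolding K_def r_def by blast
qed

lemma card_le2:
  assumes "\<And>x y z. x \<in> S \<Longrightarrow> y \<in> S \<Longrightarrow> z \<in> S \<Longrightarrow> x \<noteq> y \<Longrightarrow> y \<noteq> z \<Longrightarrow> x \<noteq> z \<Longrightarrow> False"
  shows "finite S \<and> card S \<le> 2"
proof (rule ccontr)
  assume "\<not> (finite S \<and> card S \<le> 2)"
  then obtain B where "finite B" "card B = 3" "B \<subseteq> S"
  proof (cases "finite S")
    case True
    then have "3 \<le> card S" using \<open>\<not> (finite S \<and> card S \<le> 2)\<close> by simp
    then show ?thesis using obtain_subset_with_card_n that by metis
  next
    case False
    then show ?thesis using infinite_arbitrarily_large that by metis
  qed
  then obtain x y z where "B = {x,y,z}" "x \<noteq> y" "y \<noteq> z" "x \<noteq> z" by (auto simp: card_3_iff)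
  then show False using assms \<open>B \<subseteq> S\<close> by auto
qed

theorem mainTheorem4:
  fixes g \<kappa> :: real and h :: ereal and \<Gamma> :: "(real^2) set" and c v :: "real^2"
  assumes "g > 0" and "\<kappa> > 0" and "h > 0"
    and "lattice2 \<Gamma>"
    and "v \<noteq> 0"
  shows "finite (resonant_set g \<kappa> h \<Gamma> c \<inter> {t *\<^sub>R v | t. True}) \<and>
         card (resonant_set g \<kappa> h \<Gamma> c \<inter> {t *\<^sub>R v | t. True}) \<le> 2"
proof (rule card_le2)
  define A where "A = (c \<bullet> v)^2 / (norm v)^2"
  define K where "K = (\<lambda>r. if h = \<infinity> then 1 else tanh (real_of_ereal h * r))"
  fix x y z
  assume xyz: "x \<in> resonant_set g \<kappa> h \<Gamma> c \<inter> {t *\<^sub>R v | t. True}"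
    "y \<in> resonant_set g \<kappa> h \<Gamma> c \<inter> {t *\<^sub>R v | t. True}"
    "z \<in> resonant_set g \<kappa> h \<Gamma> c \<inter> {t *\<^sub>R v | t. True}"
    "x \<noteq> y" "y \<noteq> z" "x \<noteq> z"
  obtain tx where tx: "x = tx *\<^sub>R v" "tx * (c \<bullet> v) > 0" "norm x > 0"
      "(g + \<kappa> * (norm x)^2) * K (norm x) = A * norm x"
    using point_facts[OF assms(1,2,3,5) xyz(1)] unfolding A_def K_def by blast
  obtain ty where ty: "y = ty *\<^sub>R v" "ty * (c \<bullet> v) > 0" "norm y > 0"
      "(g + \<kappa> * (norm y)^2) * K (norm y) = A * norm y"
    using point_facts[OF assms(1,2,3,5) xyz(2)] unfolding A_def K_def by blast
  obtain tz where tz: "z = tz *\<^sub>R v" "tz * (c \<bullet> v) > 0" "norm z > 0"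
      "(g + \<kappa> * (norm z)^2) * K (norm z) = A * norm z"
    using point_facts[OF assms(1,2,3,5) xyz(3)] unfolding A_def K_def by blast
  have cv: "c \<bullet> v \<noteq> 0" using tx(2) by auto
  have Ap: "A > 0" unfolding A_def using cv assms(5) by simp
  have dn: "norm a \<noteq> norm b" if "a = ta *\<^sub>R v" "b = tb *\<^sub>R v" "ta * (c \<bullet> v) > 0"
    "tb * (c \<bullet> v) > 0" "a \<noteq> b" for a b ta tb
  proof
    assume "norm a = norm b"
    then have "\<bar>ta\<bar> = \<bar>tb\<bar>" using that(1,2) assms(5) by simp
    moreover have "ta \<noteq> tb" using that(1,2,5) by auto
    ultimately have "ta = - tb" by (auto simp: abs_if split: if_splits)
    then have "ta * (c \<bullet> v) = - (tb * (c \<bullet> v))" by simp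
    then show False using that(3,4) by linarith
  qed
  have nxy: "norm x \<noteq> norm y" using dn[OF tx(1) ty(1) tx(2) ty(2) xyz(4)] .
  have nyz: "norm y \<noteq> norm z" using dn[OF ty(1) tz(1) ty(2) tz(2) xyz(5)] .
  have nxz: "norm x \<noteq> norm z" using dn[OF tx(1) tz(1) tx(2) tz(2) xyz(6)] .
  show False
  proof (cases "h = \<infinity>")
    case True
    then have "g + \<kappa> * (norm x)^2 = A * norm x" "g + \<kappa> * (norm y)^2 = A * norm y"
      "g + \<kappa> * (norm z)^2 = A * norm z" using tx(4) ty(4) tz(4) unfolding K_def by auto
    then show False using quad_false[OF assms(2) nxy nyz nxz] by blast
  next
    case False
    then have hr: "real_of_ereal h > 0" using assms(3) by (cases h) auto
    show False
    proof (rule tanh_false[OF assms(1,2) hr Ap nxy nyz nxz])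
      fix r assume "r \<in> {norm x, norm y, norm z}"
      then show "0 < r \<and> (g + \<kappa> * r\<^sup>2) * tanh (real_of_ereal h * r) = A * r"
        using tx(3,4) ty(3,4) tz(3,4) False unfolding K_def by auto
    qed
  qed
qed

end
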